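(* Let $\Omega=\{0,1\}^{\mathbb{N}}$ with canonical process $X=(X_t)_{t\in\mathbb{N}}$, natural filtration $\mathcal{F}_t=\sigma(X_s,s\le t)$ ($\mathcal{F}_0$ trivial), $\mathcal{F}=\sigma(\bigcup_t\mathcal{F}_t)$. For $n\in\mathbb{N}_0$ let $\mathbb{P}_n$ be the probability measure assigning probability $1/2$ to the all-zeros sequence $0^{\mathbb{N}}$ and probability $1/2$ to the sequence $0^n\,1\,0^{\mathbb{N}}$ (exactly one $1$, at position $n+1$). Let $\mathcal{P}=\{\mathbb{P}_n\}_{n\in\mathbb{N}_0}$ and $A=\{0^{\mathbb{N}}\}$. Then $\nu^*(A)=1/2$, $\mu^*(A)=1$, and $\mu^*(A^c)=1/2$.
   Context: Stopping times are with respect to the filtration above (values in $\mathbb{N}_0\cup\{\infty\}$), $\mathcal{T}$ is the set of all stopping times, and for $B\subseteq\Omega$: $\mu^*(B) = \inf_{\tau\in\mathcal{T}:\, B\subseteq\{\tau<\infty\}} \sup_{\mathbb{P}\in\mathcal{P}} \mathbb{P}(\tau<\infty)$ (the inverse-capital measure), and $\nu^*(B) = \sup_{\mathbb{P}\in\mathcal{P}}\mathbb{P}(B)$ for measurable $B$. *)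

theory Defs
  imports "HOL-Probability.Probability"
begin

text \<open>Sample space Omega = {0,1}^N, encoded as nat => bool with
  omega i = X_(i+1) (so coordinate i is the value of the canonical process at time i+1;
  True = 1, False = 0).\<close>

type_synonym path = "nat \<Rightarrow> bool"

definition filt :: "nat \<Rightarrow> path measure" where
  "filt t = sigma UNIV {{\<omega>. \<omega> i} | i. i < t}"

definition Finf :: "path measure" where
  "Finf = sigma UNIV {{\<omega>. \<omega> i} | i. True}"

definition is_stopping_time :: "(path \<Rightarrow> enat) \<Rightarrow> bool" where
  "is_stopping_time \<tau> \<longleftrightarrow> (\<forall>t::nat. {\<omega>. \<tau> \<omega> = enat t} \<in> sets (filt t))"

definition nu_star :: "(nat \<Rightarrow> path measure) \<Rightarrow> path set \<Rightarrow> real" where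
  "nu_star P B = (SUP n. measure (P n) B)"

definition mu_star :: "(nat \<Rightarrow> path measure) \<Rightarrow> path set \<Rightarrow> real" where
  "mu_star P B = (INF \<tau> \<in> {\<tau>. is_stopping_time \<tau> \<and> B \<subseteq> {\<omega>. \<tau> \<omega> < \<infinity>}}.
                    (SUP n. measure (P n) {\<omega>. \<tau> \<omega> < \<infinity>}))"

text \<open>The all-zeros path and the path 0^n 1 0^N (single 1 at position n+1, i.e. coordinate n).\<close>
definition zeros :: path where "zeros = (\<lambda>_. False)"
definition spike :: "nat \<Rightarrow> path" where "spike n = (\<lambda>i. i = n)"

definition Pn :: "nat \<Rightarrow> path measure" where
  "Pn n = measure_pmf (pmf_of_set {zeros, spike n})"

end

theory Submission
  imports Defs
begin

lemma sets_filt: "sets (filt t) = sigma_sets UNIV {{\<omega>. \<omega> i} | i. i < t}"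
  unfolding filt_def by (rule sets_measure_of) auto

lemma sets_Finf: "sets Finf = sigma_sets UNIV {{\<omega>. \<omega> i} | i. True}"
  unfolding Finf_def by (rule sets_measure_of) auto

lemma basic_filt: "i < t \<Longrightarrow> {\<omega>. \<omega> i} \<in> sets (filt t)"
  unfolding sets_filt by (rule sigma_sets.Basic) auto

lemma compl_filt: "i < t \<Longrightarrow> - {\<omega>. \<omega> i} \<in> sets (filt t)"
  unfolding sets_filt Compl_eq_Diff_UNIV by (rule sigma_sets.Compl, rule sigma_sets.Basic) auto

lemma filt_det:
  assumes "A \<in> sets (filt t)" "\<And>i. i < t \<Longrightarrow> \<omega> i = \<omega>' i"
  shows "\<omega> \<in> A \<longleftrightarrow> \<omega>' \<in> A"
  using assms(1) unfolding sets_filt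
proof (induction rule: sigma_sets.induct)
  case (Basic a) then show ?case using assms(2) by auto
next
  case Empty then show ?case by simp
next
  case (Compl a) then show ?case by auto
next
  case (Union a) then show ?case by auto
qed

lemma meas_Pn: "measure (Pn n) A = card (A \<inter> {zeros, spike n}) / 2"
proof -
  have ne: "zeros \<noteq> spike n" unfolding zeros_def spike_def by (metis)
  show ?thesis unfolding Pn_def
    by (subst measure_pmf_of_set) (use ne in \<open>auto simp: Int_commute\<close>)
qed

lemma zeros_ne: "zeros \<noteq> spike n"
  unfolding zeros_def spike_def by metis

lemma Pn_le1: "measure (Pn n) A \<le> 1"
  unfolding Pn_def by (rule measure_pmf.subprob_measure_le_1)

lemma bdd: "bdd_above (range (\<lambda>n. measure (Pn n) A))"
  using Pn_le1 by (auto intro!: bdd_aboveI)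

lemma part1: "{zeros} \<in> sets Finf"
proof -
  have "{zeros} = (\<Inter>i. - {\<omega>. \<omega> i})" unfolding zeros_def by auto
  moreover have "(\<Inter>i. - {\<omega>. \<omega> i}) \<in> sets Finf"
  proof (rule sets.countable_INT')
    show "range (\<lambda>i. - {\<omega>. \<omega> i}) \<subseteq> sets Finf"
    proof
      fix x assume "x \<in> range (\<lambda>i. - {\<omega>::path. \<omega> i})"
      then obtain i where "x = UNIV - {\<omega>. \<omega> i}" by auto
      then show "x \<in> sets Finf" unfolding sets_Finf
        by (metis (mono_tags, lifting) mem_Collect_eq sigma_sets.Basic sigma_sets.Compl)
    qed
  qed auto
  ultimately show ?thesis by simp
qed

lemma part2: "nu_star Pn {zeros} = 1/2"
proof -
  have "\<And>n. measure (Pn n) {zeros} = 1/2" using zeros_ne by (simp add: meas_Pn)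
  then have h: "(\<lambda>n. measure (Pn n) {zeros}) = (\<lambda>_. 1/2)" by auto
  show ?thesis unfolding nu_star_def h by simp
qed

definition tau0 :: "path \<Rightarrow> enat" where "tau0 = (\<lambda>_. 0)"

lemma tau0_st: "is_stopping_time tau0"
  unfolding is_stopping_time_def tau0_def
proof
  fix t
  show "{\<omega>::path. (0::enat) = enat t} \<in> sets (filt t)"
    by (cases t) (auto simp: zero_enat_def sets_filt intro: sigma_sets_top sigma_sets.Empty)
qed

lemma part3: "mu_star Pn {zeros} = 1"
proof -
  let ?S = "{\<tau>. is_stopping_time \<tau> \<and> {zeros} \<subseteq> {\<omega>. \<tau> \<omega> < \<infinity>}}"
  have val: "(SUP n. measure (Pn n) {\<omega>. \<tau> \<omega> < \<infinity>}) = 1" if "\<tau> \<in> ?S" for \<tau>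
  proof -
    from that have st: "is_stopping_time \<tau>" and f: "\<tau> zeros < \<infinity>" by auto
    then obtain t where t: "\<tau> zeros = enat t" by (cases "\<tau> zeros") auto
    have "{\<omega>. \<tau> \<omega> = enat t} \<in> sets (filt t)" using st unfolding is_stopping_time_def by auto
    from filt_det[OF this, of zeros "spike t"] t
    have "\<tau> (spike t) = enat t" by (auto simp: zeros_def spike_def)
    hence "measure (Pn t) {\<omega>. \<tau> \<omega> < \<infinity>} = 1" using f zeros_ne[of t]
      by (simp add: meas_Pn)
    hence "1 \<le> (SUP n. measure (Pn n) {\<omega>. \<tau> \<omega> < \<infinity>})"
      by (metis bdd cSUP_upper UNIV_I)
    moreover have "(SUP n. measure (Pn n) {\<omega>. \<tau> \<omega> < \<infinity>}) \<le> 1"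
      by (rule cSUP_least) (auto simp: Pn_le1)
    ultimately show ?thesis by simp
  qed
  have ne: "tau0 \<in> ?S" using tau0_st by (auto simp: tau0_def zero_enat_def)
  have "(INF \<tau> \<in> ?S. (SUP n. measure (Pn n) {\<omega>. \<tau> \<omega> < \<infinity>})) = (INF \<tau> \<in> ?S. 1)"
    using val by (intro INF_cong) auto
  also have "\<dots> = 1" by (rule cINF_const) (use ne in blast)
  finally show ?thesis unfolding mu_star_def .
qed

definition tau1 :: "path \<Rightarrow> enat" where
  "tau1 \<omega> = (if \<exists>i. \<omega> i then enat (Suc (LEAST i. \<omega> i)) else \<infinity>)"

lemma tau1_st: "is_stopping_time tau1"
  unfolding is_stopping_time_def
proof
  fix t
  show "{\<omega>. tau1 \<omega> = enat t} \<in> sets (filt t)"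
  proof (cases t)
    case 0
    have "{\<omega>. tau1 \<omega> = enat t} = {}" using 0 by (auto simp: tau1_def split: if_splits)
    then show ?thesis by simp
  next
    case (Suc k)
    have eq: "{\<omega>. tau1 \<omega> = enat t} = {\<omega>. \<omega> k} \<inter> (\<Inter>i\<in>{..<k}. - {\<omega>. \<omega> i})"
    proof (intro set_eqI iffI)
      fix \<omega> assume "\<omega> \<in> {\<omega>. tau1 \<omega> = enat t}"
      then have ex: "\<exists>i. \<omega> i" and l: "(LEAST i. \<omega> i) = k"
        by (auto simp: tau1_def Suc split: if_splits)
      show "\<omega> \<in> {\<omega>. \<omega> k} \<inter> (\<Inter>i\<in>{..<k}. - {\<omega>. \<omega> i})"
        using LeastI_ex[OF ex] not_less_Least[of _ "\<lambda>i. \<omega> i"] l by auto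
    next
      fix \<omega> assume a: "\<omega> \<in> {\<omega>. \<omega> k} \<inter> (\<Inter>i\<in>{..<k}. - {\<omega>. \<omega> i})"
      then have "(LEAST i. \<omega> i) = k"
        by (intro Least_equality) (auto simp: not_less[symmetric])
      then show "\<omega> \<in> {\<omega>. tau1 \<omega> = enat t}" using a by (auto simp: tau1_def Suc)
    qed
    show ?thesis
    proof (cases "k = 0")
      case True
      then show ?thesis unfolding eq by (simp add: basic_filt Suc)
    next
      case False
      then show ?thesis unfolding eq
        by (intro sets.Int sets.finite_INT compl_filt basic_filt) (auto simp: Suc)
    qed
  qed
qed

lemma part4: "mu_star Pn (- {zeros}) = 1/2"
proof -
  let ?S = "{\<tau>. is_stopping_time \<tau> \<and> - {zeros} \<subseteq> {\<omega>. \<tau> \<omega> < \<infinity>}}"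
  let ?f = "\<lambda>\<tau>. (SUP n. measure (Pn n) {\<omega>. \<tau> \<omega> < \<infinity>})"
  have lb: "1/2 \<le> ?f \<tau>" if "\<tau> \<in> ?S" for \<tau>
  proof -
    have "spike 0 \<noteq> zeros" using zeros_ne by metis
    with that have "\<tau> (spike 0) < \<infinity>" by auto
    hence "{spike 0} \<subseteq> {\<omega>. \<tau> \<omega> < \<infinity>} \<inter> {zeros, spike 0}" by auto
    hence "card {spike 0} \<le> card ({\<omega>. \<tau> \<omega> < \<infinity>} \<inter> {zeros, spike 0})"
      by (intro card_mono) auto
    hence "1/2 \<le> measure (Pn 0) {\<omega>. \<tau> \<omega> < \<infinity>}"
      by (simp add: meas_Pn)
    also have "\<dots> \<le> ?f \<tau>" by (metis bdd cSUP_upper UNIV_I)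
    finally show ?thesis .
  qed
  have mem: "tau1 \<in> ?S"
  proof -
    have "tau1 \<omega> < \<infinity>" if "\<omega> \<noteq> zeros" for \<omega>
    proof -
      have "\<exists>i. \<omega> i" using that unfolding zeros_def by auto
      then show ?thesis by (simp add: tau1_def)
    qed
    then show ?thesis using tau1_st by auto
  qed
  have v1: "?f tau1 = 1/2"
  proof -
    have "tau1 zeros = \<infinity>" by (simp add: tau1_def zeros_def)
    moreover have "tau1 (spike n) < \<infinity>" for n by (auto simp: tau1_def spike_def)
    ultimately have "measure (Pn n) {\<omega>. tau1 \<omega> < \<infinity>} = 1/2" for n
      using zeros_ne[of n] by (simp add: meas_Pn)
    then have h: "(\<lambda>n. measure (Pn n) {\<omega>. tau1 \<omega> < \<infinity>}) = (\<lambda>_. 1/2)" by auto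
    show ?thesis unfolding h by simp
  qed
  have "Inf (?f ` ?S) \<le> ?f tau1"
    by (rule cINF_lower[OF bdd_belowI[where m="1/2"] mem]) (use lb in auto)
  moreover have "1/2 \<le> Inf (?f ` ?S)"
    by (rule cINF_greatest) (use mem lb in auto)
  ultimately show ?thesis unfolding mu_star_def using v1 by linarith
qed

theorem mainTheorem9:
  shows "{zeros} \<in> sets Finf \<and> nu_star Pn {zeros} = 1/2 \<and> mu_star Pn {zeros} = 1
         \<and> mu_star Pn (- {zeros}) = 1/2"
  using part1 part2 part3 part4 by blast

end
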